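(* For a given diagonal section $\delta$ we have $\mu_\delta=\mu(D_\delta)$, where $D_\delta(x,y)=\overline{C}_\delta(x,y)$ for $x\le y$ and $D_\delta(x,y)=B_\delta(x,y)$ for $x\ge y$.
   Context: A diagonal section is a function $\delta\colon[0,1]\to[0,1]$ that is the diagonal $x\mapsto C(x,x)$ of some bivariate copula $C$; equivalently $\delta(x)\le x$, $0\le\delta(y)-\delta(x)\le 2(y-x)$ for $x\le y$, and $\delta(1)=1$. Write $\widehat{\delta}(x)=x-\delta(x)$. $\overline{C}_\delta(x,y)=\sup\{C(x,y)\colon C \text{ a copula with diagonal section } \delta\}$, and $B_\delta(x,y)=\min\{x,y\}-\min_{t\in[\min\{x,y\},\max\{x,y\}]}\widehat{\delta}(t)$ is the Bertino copula. The function $D_\delta$ (diagonal splice of $\overline{C}_\delta$ and $B_\delta$) is a copula with diagonal section $\delta$. For a copula $C$, its asymmetry is $\mu(C)=\max\{|C(x,y)-C(y,x)|\colon x,y\in[0,1]\}$, and $\mu_\delta=\sup\{\mu(C)\colon C \text{ a copula with diagonal section } \delta\}$ is the maximal asymmetry of copulas with diagonal section $\delta$. *)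

theory Defs
  imports Complex_Main
begin

text \<open>Bivariate copulas, represented as functions real => real => real; only
  their values on the unit square matter.\<close>
definition copula :: "(real \<Rightarrow> real \<Rightarrow> real) \<Rightarrow> bool" where
  "copula C \<longleftrightarrow>
     (\<forall>x\<in>{0..1}. C x 0 = 0 \<and> C 0 x = 0 \<and> C x 1 = x \<and> C 1 x = x) \<and>
     (\<forall>x1\<in>{0..1}. \<forall>x2\<in>{0..1}. \<forall>y1\<in>{0..1}. \<forall>y2\<in>{0..1}.
        x1 \<le> x2 \<longrightarrow> y1 \<le> y2 \<longrightarrow> C x1 y1 + C x2 y2 - C x1 y2 - C x2 y1 \<ge> 0)"

definition has_diagonal :: "(real \<Rightarrow> real \<Rightarrow> real) \<Rightarrow> (real \<Rightarrow> real) \<Rightarrow> bool" where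
  "has_diagonal C \<delta> \<longleftrightarrow> (\<forall>x\<in>{0..1}. C x x = \<delta> x)"

definition diagonal_section :: "(real \<Rightarrow> real) \<Rightarrow> bool" where
  "diagonal_section \<delta> \<longleftrightarrow> (\<exists>C. copula C \<and> has_diagonal C \<delta>)"

definition delta_hat :: "(real \<Rightarrow> real) \<Rightarrow> real \<Rightarrow> real" where
  "delta_hat \<delta> x = x - \<delta> x"

definition C_upper :: "(real \<Rightarrow> real) \<Rightarrow> real \<Rightarrow> real \<Rightarrow> real" where
  "C_upper \<delta> x y = (SUP C\<in>{C. copula C \<and> has_diagonal C \<delta>}. C x y)"

text \<open>Bertino copula (the minimum exists by continuity; written as an infimum).\<close>
definition bertino :: "(real \<Rightarrow> real) \<Rightarrow> real \<Rightarrow> real \<Rightarrow> real" where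
  "bertino \<delta> x y = min x y - (INF t\<in>{min x y..max x y}. delta_hat \<delta> t)"

definition D_splice :: "(real \<Rightarrow> real) \<Rightarrow> real \<Rightarrow> real \<Rightarrow> real" where
  "D_splice \<delta> x y = (if x \<le> y then C_upper \<delta> x y else bertino \<delta> x y)"

text \<open>Asymmetry of a copula (the maximum exists by continuity; written as a supremum).\<close>
definition copula_asym :: "(real \<Rightarrow> real \<Rightarrow> real) \<Rightarrow> real" where
  "copula_asym C = (SUP p\<in>{0..1} \<times> {0..1}. \<bar>C (fst p) (snd p) - C (snd p) (fst p)\<bar>)"

definition max_asym :: "(real \<Rightarrow> real) \<Rightarrow> real" where
  "max_asym \<delta> = (SUP C\<in>{C. copula C \<and> has_diagonal C \<delta>}. copula_asym C)"

end

theory Submission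
  imports Defs
begin

lemma cbd:
  assumes "copula C" "x \<in> {0..1}"
  shows "C x 0 = 0" "C 0 x = 0" "C x 1 = x" "C 1 x = x"
  using assms unfolding copula_def by auto

lemma cinc:
  assumes "copula C" "0 \<le> x1" "x1 \<le> x2" "x2 \<le> 1" "0 \<le> y1" "y1 \<le> y2" "y2 \<le> 1"
  shows "C x1 y1 + C x2 y2 - C x1 y2 - C x2 y1 \<ge> 0"
  using assms unfolding copula_def by auto

lemma cbounds:
  assumes c: "copula C" and x: "0 \<le> x" "x \<le> 1" and y: "0 \<le> y" "y \<le> 1"
  shows "0 \<le> C x y" "C x y \<le> x" "C x y \<le> y"
proof -
  have "C 0 0 + C x y - C 0 y - C x 0 \<ge> 0" using cinc[OF c, of 0 x 0 y] x y by auto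
  then show "0 \<le> C x y" using cbd[OF c, of 0] cbd[OF c, of x] cbd[OF c, of y] x y by auto
  have "C x 0 + C 1 y - C x y - C 1 0 \<ge> 0" using cinc[OF c, of x 1 0 y] x y by auto
  then show "C x y \<le> y" using cbd[OF c, of 0] cbd[OF c, of x] cbd[OF c, of y] x y by auto
  have "C 0 y + C x 1 - C 0 1 - C x y \<ge> 0" using cinc[OF c, of 0 x y 1] x y by auto
  then show "C x y \<le> x" using cbd[OF c, of 0] cbd[OF c, of x] cbd[OF c, of y] x y by auto
qed

lemma cmono2:
  assumes c: "copula C" "0 \<le> x" "x \<le> 1" "0 \<le> y1" "y1 \<le> y2" "y2 \<le> 1"
  shows "C x y1 \<le> C x y2"
  using cinc[OF c(1), of 0 x y1 y2] cbd[OF c(1), of y1] cbd[OF c(1), of y2] c by auto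

lemma cmono1:
  assumes c: "copula C" "0 \<le> x1" "x1 \<le> x2" "x2 \<le> 1" "0 \<le> y" "y \<le> 1"
  shows "C x1 y \<le> C x2 y"
  using cinc[OF c(1), of x1 x2 0 y] cbd[OF c(1), of x1] cbd[OF c(1), of x2] c by auto

lemma clip1:
  assumes c: "copula C" "0 \<le> x1" "x1 \<le> x2" "x2 \<le> 1" "0 \<le> y" "y \<le> 1"
  shows "C x2 y - C x1 y \<le> x2 - x1"
  using cinc[OF c(1), of x1 x2 y 1] cbd[OF c(1), of x1] cbd[OF c(1), of x2] c by auto

lemma clip2:
  assumes c: "copula C" "0 \<le> x" "x \<le> 1" "0 \<le> y1" "y1 \<le> y2" "y2 \<le> 1"
  shows "C x y2 - C x y1 \<le> y2 - y1"
  using cinc[OF c(1), of x 1 y1 y2] cbd[OF c(1), of y1] cbd[OF c(1), of y2] c by auto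

lemma ctrans:
  assumes "copula C" "has_diagonal C \<delta>"
  shows "copula (\<lambda>x y. C y x)" "has_diagonal (\<lambda>x y. C y x) \<delta>"
proof -
  show "copula (\<lambda>x y. C y x)"
    unfolding copula_def
  proof (intro conjI ballI impI)
    fix x1 x2 y1 y2 :: real assume "x1 \<in> {0..1}" "x2 \<in> {0..1}" "y1 \<in> {0..1}" "y2 \<in> {0..1}"
      "x1 \<le> x2" "y1 \<le> y2"
    then show "0 \<le> C y1 x1 + C y2 x2 - C y2 x1 - C y1 x2"
      using cinc[OF assms(1), of y1 y2 x1 x2] by auto
  qed (use cbd[OF assms(1)] in auto)
  show "has_diagonal (\<lambda>x y. C y x) \<delta>" using assms(2) unfolding has_diagonal_def by auto
qed

lemma dh_nonneg:
  assumes "copula C" "has_diagonal C \<delta>" "0 \<le> t" "t \<le> 1"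
  shows "0 \<le> delta_hat \<delta> t"
  using cbounds[OF assms(1), of t t] assms unfolding has_diagonal_def delta_hat_def by auto

lemma dh_bdd:
  assumes "copula C" "has_diagonal C \<delta>" "0 \<le> a" "b \<le> 1"
  shows "bdd_below (delta_hat \<delta> ` {a..b})"
  by (rule bdd_belowI2[where m=0]) (use dh_nonneg[OF assms(1,2)] assms in auto)

lemma bert_sym: "bertino \<delta> x y = bertino \<delta> y x"
  by (simp add: bertino_def min.commute max.commute)

lemma bert_diag: "bertino \<delta> x x = \<delta> x"
  by (simp add: bertino_def delta_hat_def)

lemma bert_le_aux:
  assumes c: "copula C" "has_diagonal C \<delta>" and xy: "0 \<le> x" "x \<le> y" "y \<le> 1"
  shows "bertino \<delta> x y \<le> C x y"
proof -
  have "x - C x y \<le> (INF t\<in>{x..y}. delta_hat \<delta> t)"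
  proof (rule cINF_greatest)
    show "{x..y} \<noteq> {}" using xy by auto
    fix t assume t: "t \<in> {x..y}"
    have "C x t \<le> C x y" using cmono2[OF c(1), of x t y] t xy by auto
    moreover have "C t t - C x t \<le> t - x" using clip1[OF c(1), of x t t] t xy by auto
    moreover have "C t t = \<delta> t" using c(2) t xy unfolding has_diagonal_def by auto
    ultimately show "x - C x y \<le> delta_hat \<delta> t" unfolding delta_hat_def by linarith
  qed
  then show ?thesis using xy unfolding bertino_def by auto
qed

lemma bert_le:
  assumes c: "copula C" "has_diagonal C \<delta>" and xy: "0 \<le> x" "x \<le> 1" "0 \<le> y" "y \<le> 1"
  shows "bertino \<delta> x y \<le> C x y"
proof (cases "x \<le> y")
  case True then show ?thesis using bert_le_aux[OF c] xy by auto
next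
  case False
  have "bertino \<delta> y x \<le> C y x" if "copula C" "has_diagonal C \<delta>" for C
    using bert_le_aux[OF that] xy False by auto
  from this[OF ctrans[OF c]] show ?thesis by (simp add: bert_sym)
qed

lemma bert_nonneg:
  assumes c: "copula C" "has_diagonal C \<delta>" and xy: "0 \<le> x" "x \<le> 1" "0 \<le> y" "y \<le> 1"
  shows "0 \<le> bertino \<delta> x y"
proof -
  have "(INF t\<in>{min x y..max x y}. delta_hat \<delta> t) \<le> delta_hat \<delta> (min x y)"
    by (rule cINF_lower) (use dh_bdd[OF c] xy in auto)
  moreover have "\<delta> (min x y) \<ge> 0"
    using c(2) cbounds(1)[OF c(1), of "min x y" "min x y"] xy unfolding has_diagonal_def
    by (auto simp: min_def)
  ultimately show ?thesis unfolding bertino_def delta_hat_def by linarith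
qed

lemma bert_lower_inc:
  assumes c: "copula C" "has_diagonal C \<delta>"
    and o: "0 \<le> y1" "y1 \<le> y2" "y2 \<le> x1" "x1 \<le> x2" "x2 \<le> 1"
  shows "bertino \<delta> x1 y1 + bertino \<delta> x2 y2 - bertino \<delta> x1 y2 - bertino \<delta> x2 y1 \<ge> 0"
proof -
  define m where "m a b = (INF t\<in>{a..b}. delta_hat \<delta> t)" for a b
  have B: "bertino \<delta> x y = y - m y x" if "y \<le> x" for x y
    using that unfolding bertino_def m_def by (simp add: min_def max_def)
  have bd: "bdd_below (delta_hat \<delta> ` {a..b})" if "0 \<le> a" "b \<le> 1" for a b
    using dh_bdd[OF c that] .
  have m1: "m y1 x1 \<le> m y2 x1" unfolding m_def
    by (rule cINF_superset_mono) (use o bd in auto)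
  have m2: "m y2 x2 \<le> m y2 x1" unfolding m_def
    by (rule cINF_superset_mono) (use o bd in auto)
  have m3: "min (m y1 x1) (m y2 x2) \<le> m y1 x2" unfolding m_def
  proof (rule cINF_greatest)
    show "{y1..x2} \<noteq> {}" using o by auto
    fix t assume t: "t \<in> {y1..x2}"
    show "min (INF t\<in>{y1..x1}. delta_hat \<delta> t) (INF t\<in>{y2..x2}. delta_hat \<delta> t) \<le> delta_hat \<delta> t"
    proof (cases "t \<le> x1")
      case True
      then have "(INF t\<in>{y1..x1}. delta_hat \<delta> t) \<le> delta_hat \<delta> t"
        by (intro cINF_lower) (use t o bd in auto)
      then show ?thesis by linarith
    next
      case False
      then have "(INF t\<in>{y2..x2}. delta_hat \<delta> t) \<le> delta_hat \<delta> t"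
        by (intro cINF_lower) (use t o bd in auto)
      then show ?thesis by linarith
    qed
  qed
  show ?thesis using B[of y1 x1] B[of y2 x2] B[of y2 x1] B[of y1 x2] o m1 m2 m3
    by (auto simp: min_def split: if_splits)
qed


definition vol :: "(real \<Rightarrow> real \<Rightarrow> real) \<Rightarrow> real \<Rightarrow> real \<Rightarrow> real \<Rightarrow> real \<Rightarrow> real" where
  "vol F x1 x2 y1 y2 = F x1 y1 + F x2 y2 - F x1 y2 - F x2 y1"

lemma grid:
  assumes up: "\<And>x1 x2 y1 y2. 0 \<le> x1 \<Longrightarrow> x1 \<le> x2 \<Longrightarrow> x2 \<le> y1 \<Longrightarrow> y1 \<le> y2 \<Longrightarrow> y2 \<le> 1
      \<Longrightarrow> vol F x1 x2 y1 y2 \<ge> 0"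
    and lo: "\<And>x1 x2 y1 y2. 0 \<le> y1 \<Longrightarrow> y1 \<le> y2 \<Longrightarrow> y2 \<le> x1 \<Longrightarrow> x1 \<le> x2 \<Longrightarrow> x2 \<le> 1
      \<Longrightarrow> vol F x1 x2 y1 y2 \<ge> 0"
    and sq: "\<And>a b. 0 \<le> a \<Longrightarrow> a \<le> b \<Longrightarrow> b \<le> 1 \<Longrightarrow> vol F a b a b \<ge> 0"
    and r: "0 \<le> x1" "x1 \<le> x2" "x2 \<le> 1" "0 \<le> y1" "y1 \<le> y2" "y2 \<le> 1"
  shows "vol F x1 x2 y1 y2 \<ge> 0"
proof (cases "x2 \<le> y1")
  case True then show ?thesis using up r by auto
next
  case n1: False
  show ?thesis
  proof (cases "y2 \<le> x1")
    case True then show ?thesis using lo r by auto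
  next
    case n2: False
    define a where "a = max x1 y1"
    define b where "b = min x2 y2"
    have ab: "x1 \<le> a" "y1 \<le> a" "a \<le> b" "b \<le> x2" "b \<le> y2" "0 \<le> a" "b \<le> 1"
      using n1 n2 r unfolding a_def b_def by auto
    have c11: "vol F x1 a y1 a \<ge> 0"
    proof (cases "x1 \<le> y1")
      case True then have "a = y1" unfolding a_def by auto
      then show ?thesis using up[of x1 a y1 a] True r by auto
    next
      case False then have "a = x1" unfolding a_def by auto
      then show ?thesis using lo[of y1 a x1 a] False r by auto
    qed
    have c33: "vol F b x2 b y2 \<ge> 0"
    proof (cases "x2 \<le> y2")
      case True then have "b = x2" unfolding b_def by auto
      then show ?thesis using up[of b x2 b y2] True r by auto
    next
      case False then have "b = y2" unfolding b_def by auto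
      then show ?thesis using lo[of b y2 b x2] False r by auto
    qed
    have c12: "vol F x1 a a b \<ge> 0" using up[of x1 a a b] ab r by auto
    have c13: "vol F x1 a b y2 \<ge> 0" using up[of x1 a b y2] ab r by auto
    have c21: "vol F a b y1 a \<ge> 0" using lo[of y1 a a b] ab r by auto
    have c22: "vol F a b a b \<ge> 0" using sq[of a b] ab by auto
    have c23: "vol F a b b y2 \<ge> 0" using up[of a b b y2] ab r by auto
    have c31: "vol F b x2 y1 a \<ge> 0" using lo[of y1 a b x2] ab r by auto
    have c32: "vol F b x2 a b \<ge> 0" using lo[of a b b x2] ab r by auto
    show ?thesis using c11 c12 c13 c21 c22 c23 c31 c32 c33 unfolding vol_def by linarith
  qed
qed

definition splice :: "(real \<Rightarrow> real \<Rightarrow> real) \<Rightarrow> (real \<Rightarrow> real) \<Rightarrow> real \<Rightarrow> real \<Rightarrow> real" where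
  "splice C \<delta> x y = (if x \<le> y then C x y else bertino \<delta> x y)"

lemma splice_lo:
  assumes "has_diagonal C \<delta>" "y \<le> x" "0 \<le> x" "x \<le> 1"
  shows "splice C \<delta> x y = bertino \<delta> x y"
  using assms unfolding splice_def has_diagonal_def by (auto simp: bert_diag)

lemma splice_cop:
  assumes c: "copula C" "has_diagonal C \<delta>"
  shows "copula (splice C \<delta>)" "has_diagonal (splice C \<delta>) \<delta>"
proof -
  show "has_diagonal (splice C \<delta>) \<delta>" using c(2) unfolding has_diagonal_def splice_def by auto
  have d0: "\<delta> 0 = 0" using c cbd(1)[OF c(1), of 0] unfolding has_diagonal_def by auto
  have d1: "\<delta> 1 = 1" using c cbd(3)[OF c(1), of 1] unfolding has_diagonal_def by auto
  have b0: "bertino \<delta> x 0 = 0" if "0 \<le> x" "x \<le> 1" for x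
  proof -
    have "(INF t\<in>{0..x}. delta_hat \<delta> t) \<le> delta_hat \<delta> 0"
      by (rule cINF_lower) (use dh_bdd[OF c] that in auto)
    moreover have "0 \<le> (INF t\<in>{0..x}. delta_hat \<delta> t)"
      by (rule cINF_greatest) (use dh_nonneg[OF c] that in auto)
    ultimately show ?thesis using that d0 unfolding bertino_def delta_hat_def by auto
  qed
  have b1: "bertino \<delta> 1 x = x" if "0 \<le> x" "x \<le> 1" for x
  proof -
    have "(INF t\<in>{x..1}. delta_hat \<delta> t) \<le> delta_hat \<delta> 1"
      by (rule cINF_lower) (use dh_bdd[OF c] that in auto)
    moreover have "0 \<le> (INF t\<in>{x..1}. delta_hat \<delta> t)"
      by (rule cINF_greatest) (use dh_nonneg[OF c] that in auto)
    ultimately show ?thesis using that d1 unfolding bertino_def delta_hat_def by auto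
  qed
  have inc: "vol (splice C \<delta>) x1 x2 y1 y2 \<ge> 0"
    if r: "0 \<le> x1" "x1 \<le> x2" "x2 \<le> 1" "0 \<le> y1" "y1 \<le> y2" "y2 \<le> 1" for x1 x2 y1 y2
  proof (rule grid[OF _ _ _ r])
    fix x1 x2 y1 y2 :: real
    assume o: "0 \<le> x1" "x1 \<le> x2" "x2 \<le> y1" "y1 \<le> y2" "y2 \<le> 1"
    then show "vol (splice C \<delta>) x1 x2 y1 y2 \<ge> 0"
      using cinc[OF c(1), of x1 x2 y1 y2] unfolding vol_def splice_def by auto
  next
    fix x1 x2 y1 y2 :: real
    assume o: "0 \<le> y1" "y1 \<le> y2" "y2 \<le> x1" "x1 \<le> x2" "x2 \<le> 1"
    then show "vol (splice C \<delta>) x1 x2 y1 y2 \<ge> 0"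
      using bert_lower_inc[OF c o] splice_lo[OF c(2)] unfolding vol_def by auto
  next
    fix a b :: real assume o: "0 \<le> a" "a \<le> b" "b \<le> 1"
    have "C a a + C b b - C a b - C b a \<ge> 0" using cinc[OF c(1), of a b a b] o by auto
    moreover have "bertino \<delta> b a \<le> C b a" using bert_le[OF c, of b a] o by auto
    moreover have "splice C \<delta> b a = bertino \<delta> b a" using splice_lo[OF c(2), of a b] o by auto
    ultimately show "vol (splice C \<delta>) a b a b \<ge> 0" using o unfolding vol_def splice_def by auto
  qed
  show "copula (splice C \<delta>)"
    unfolding copula_def
  proof (intro conjI ballI impI)
    fix x1 x2 y1 y2 :: real assume "x1 \<in> {0..1}" "x2 \<in> {0..1}" "y1 \<in> {0..1}" "y2 \<in> {0..1}"
      "x1 \<le> x2" "y1 \<le> y2"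
    then show "0 \<le> splice C \<delta> x1 y1 + splice C \<delta> x2 y2 - splice C \<delta> x1 y2 - splice C \<delta> x2 y1"
      using inc[of x1 x2 y1 y2] unfolding vol_def by auto
  qed (use cbd[OF c(1)] b0 b1 in \<open>auto simp: splice_def\<close>)
qed


lemma asym_upper:
  assumes c: "copula C" and p: "p \<in> {0..1} \<times> {0..1}"
  shows "\<bar>C (fst p) (snd p) - C (snd p) (fst p)\<bar> \<le> copula_asym C"
  unfolding copula_asym_def
proof (rule cSUP_upper[OF p])
  show "bdd_above ((\<lambda>p. \<bar>C (fst p) (snd p) - C (snd p) (fst p)\<bar>) ` ({0..1} \<times> {0..1}))"
  proof (rule bdd_aboveI2[where M=1])
    fix q :: "real \<times> real" assume "q \<in> {0..1} \<times> {0..1}"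
    then show "\<bar>C (fst q) (snd q) - C (snd q) (fst q)\<bar> \<le> 1"
      using cbounds[OF c, of "fst q" "snd q"] cbounds[OF c, of "snd q" "fst q"] by auto
  qed
qed

theorem corollary4p4:
  fixes \<delta> :: "real \<Rightarrow> real"
  assumes "diagonal_section \<delta>"
  shows "max_asym \<delta> = copula_asym (D_splice \<delta>)"
proof -
  define S where "S = {C. copula C \<and> has_diagonal C \<delta>}"
  obtain C0 where C0: "copula C0" "has_diagonal C0 \<delta>"
    using assms unfolding diagonal_section_def by auto
  have Sne: "S \<noteq> {}" using C0 unfolding S_def by auto
  define f where "f C p = \<bar>C (fst p) (snd p) - C (snd p) (fst p)\<bar>" for C :: "real \<Rightarrow> real \<Rightarrow> real" and p :: "real \<times> real"
  define Dd where "Dd = D_splice \<delta>"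
  define Cup where "Cup = C_upper \<delta>"
  define B where "B = bertino \<delta>"
  have bddC: "bdd_above ((\<lambda>C. C x y) ` S)" if "0 \<le> x" "x \<le> 1" "0 \<le> y" "y \<le> 1" for x y
    by (rule bdd_aboveI2[where M=1]) (use cbounds that in \<open>force simp: S_def\<close>)
  have Cup_ge: "C x y \<le> Cup x y" if "C \<in> S" "0 \<le> x" "x \<le> 1" "0 \<le> y" "y \<le> 1" for C x y
    unfolding Cup_def C_upper_def S_def[symmetric] by (rule cSUP_upper[OF that(1) bddC[OF that(2-)]])
  have Cup_le: "Cup x y \<le> 1" if "0 \<le> x" "x \<le> 1" "0 \<le> y" "y \<le> 1" for x y
    unfolding Cup_def C_upper_def S_def[symmetric]
    by (rule cSUP_least[OF Sne]) (use cbounds that in \<open>force simp: S_def\<close>)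
  have key: "f C (x, y) \<le> f Dd (x, y) \<and> f Dd (x, y) \<le> 1 \<and>
      (x < y \<longrightarrow> f Dd (x, y) = Cup x y - B x y \<and> Cup x y - B x y \<ge> 0)"
    if CS: "C \<in> S" and r: "0 \<le> x" "x \<le> y" "y \<le> 1" for C x y
  proof (cases "x = y")
    case True then show ?thesis unfolding f_def by simp
  next
    case False
    then have xy: "x < y" using r by auto
    have cC: "copula C" "has_diagonal C \<delta>" using CS unfolding S_def by auto
    have CT: "(\<lambda>x y. C y x) \<in> S" using ctrans[OF cC] unfolding S_def by auto
    have D1: "Dd x y = Cup x y" "Dd y x = B x y"
      using xy unfolding Dd_def D_splice_def Cup_def B_def by (auto simp: bert_sym)
    have h1: "C x y \<le> Cup x y" using Cup_ge[OF CS] r by auto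
    have h2: "C y x \<le> Cup x y" using Cup_ge[OF CT] r by auto
    have h3: "B x y \<le> C x y" "B x y \<le> C y x"
      using bert_le[OF cC, of x y] bert_le[OF cC, of y x] r unfolding B_def by (auto simp: bert_sym)
    have h4: "0 \<le> B x y" using bert_nonneg[OF cC, of x y] r unfolding B_def by auto
    have h5: "Cup x y \<le> 1" using Cup_le r by auto
    show ?thesis using D1 h1 h2 h3 h4 h5 xy unfolding f_def by auto
  qed
  have fsym: "f C (x, y) = f C (y, x)" for C x y unfolding f_def by simp
  have key2: "f C p \<le> f Dd p \<and> f Dd p \<le> 1" if "C \<in> S" "p \<in> {0..1} \<times> {0..1}" for C p
  proof -
    obtain x y where p: "p = (x, y)" by (cases p)
    show ?thesis
    proof (cases "x \<le> y")
      case True then show ?thesis using key[OF that(1), of x y] that p by auto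
    next
      case False then show ?thesis using key[OF that(1), of y x] that p fsym[of C x y] fsym[of Dd x y] by auto
    qed
  qed
  have asym_eq: "copula_asym C = (SUP p\<in>{0..1} \<times> {0..1}. f C p)" for C
    unfolding copula_asym_def f_def by simp
  have bddD: "bdd_above (f Dd ` ({0..1} \<times> {0..1}))"
    by (rule bdd_aboveI2[where M=1]) (use key2 Sne in auto)
  have asymC: "copula_asym C \<le> copula_asym Dd" if "C \<in> S" for C
    unfolding asym_eq
  proof (rule cSUP_least)
    show "{0..1::real} \<times> {0..1::real} \<noteq> {}" by auto
    fix p assume p: "p \<in> {0..1::real} \<times> {0..1::real}"
    have "f Dd p \<le> (SUP p\<in>{0..1} \<times> {0..1}. f Dd p)" by (rule cSUP_upper[OF p bddD])
    then show "f C p \<le> (SUP p\<in>{0..1} \<times> {0..1}. f Dd p)" using key2[OF that p] by auto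
  qed
  have bddS: "bdd_above (copula_asym ` S)" by (rule bdd_aboveI2) (use asymC in auto)
  have le_max: "copula_asym C \<le> max_asym \<delta>" if "C \<in> S" for C
    unfolding max_asym_def S_def[symmetric] by (rule cSUP_upper[OF that bddS])
  have ge1: "max_asym \<delta> \<le> copula_asym Dd"
    unfolding max_asym_def S_def[symmetric] by (rule cSUP_least[OF Sne]) (use asymC in auto)
  have pt: "f Dd (x, y) \<le> max_asym \<delta>" if r: "0 \<le> x" "x \<le> y" "y \<le> 1" for x y
  proof (cases "x = y")
    case True
    have "C0 \<in> S" using C0 unfolding S_def by auto
    then have "f C0 (0, 0) \<le> max_asym \<delta>"
      using asym_upper[OF C0(1), of "(0,0)"] le_max[of C0] unfolding f_def by auto
    then show ?thesis using True unfolding f_def by simp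
  next
    case False
    then have xy: "x < y" using r by auto
    have C0S: "C0 \<in> S" using C0 unfolding S_def by auto
    have fD: "f Dd (x, y) = Cup x y - B x y" using key[OF C0S r] xy by auto
    show ?thesis unfolding fD
    proof (rule field_le_epsilon)
      fix e :: real assume e: "0 < e"
      have "Cup x y - e < Cup x y" using e by auto
      then have "\<exists>C\<in>S. Cup x y - e < C x y"
        unfolding Cup_def C_upper_def S_def[symmetric]
        using less_cSUP_iff[OF Sne bddC[of x y]] r by auto
      then obtain C where CS: "C \<in> S" and Cl: "Cup x y - e < C x y" by auto
      have cC: "copula C" "has_diagonal C \<delta>" using CS unfolding S_def by auto
      define E where "E = splice C \<delta>"
      have ES: "E \<in> S" using splice_cop[OF cC] unfolding S_def E_def by auto
      have E1: "E x y = C x y" "E y x = B x y"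
        using xy unfolding E_def splice_def B_def by (auto simp: bert_sym)
      have "f E (x, y) \<le> copula_asym E"
        using asym_upper[of E "(x,y)"] ES r unfolding S_def f_def by auto
      then have "C x y - B x y \<le> max_asym \<delta>" using le_max[OF ES] E1 unfolding f_def by auto
      then show "Cup x y - B x y \<le> max_asym \<delta> + e" using Cl by auto
    qed
  qed
  have ge2: "copula_asym Dd \<le> max_asym \<delta>"
    unfolding asym_eq
  proof (rule cSUP_least)
    show "{0..1::real} \<times> {0..1::real} \<noteq> {}" by auto
    fix p assume p: "p \<in> {0..1::real} \<times> {0..1::real}"
    obtain x y where pe: "p = (x, y)" by (cases p)
    show "f Dd p \<le> max_asym \<delta>"
    proof (cases "x \<le> y")
      case True then show ?thesis using pt[of x y] p pe by auto
    next
      case False then show ?thesis using pt[of y x] p pe fsym[of Dd x y] by auto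
    qed
  qed
  show ?thesis using ge1 ge2 unfolding Dd_def by auto
qed

end
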